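(* Let $q=p^m$ with $p$ an odd prime, $m\ge1$, and $q\equiv 1\pmod 6$. Let $f(x)=x^{q+2}$ on $\mathbb{F}_{q^2}$ and for $b\in\mathbb{F}_{q^2}$ put $\beta(b)=\beta_f(1,\tfrac14 b)$. Then for every $c\in\mathbb{F}_q^*$: $\beta(2c)=3$ if $c^2+1\in C_1$; $\beta(2c)\in\{0,3\}$ if $c^2+1\in C_0$; and $\beta(2c)\in\{0,1,2\}$ if $c^2+1=0$.
   Context: $\beta_f(a,b)$ is the number of $(x,y)\in\mathbb{F}_{q^2}^2$ with $f(x)-f(y)=b$ and $f(x+a)-f(y+a)=b$. $C_0$ (resp. $C_1$) denotes the set of nonzero squares (resp. non-squares) in $\mathbb{F}_q^*$. *)

theory Defs
  imports Main "HOL-Computational_Algebra.Primes" "HOL-Library.Cardinality"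
begin

text \<open>The ambient field is a finite field type 'a of cardinality q^2 (F_{q^2}).
  The subfield F_q is the set of elements fixed by the q-th power Frobenius.\<close>

definition subfield_q :: "nat \<Rightarrow> 'a::field set" where
  "subfield_q q = {x. x ^ q = x}"

definition C0 :: "nat \<Rightarrow> 'a::field set" where
  "C0 q = {x \<in> subfield_q q. x \<noteq> 0 \<and> (\<exists>y \<in> subfield_q q. y ^ 2 = x)}"

definition C1 :: "nat \<Rightarrow> 'a::field set" where
  "C1 q = {x \<in> subfield_q q. x \<noteq> 0 \<and> \<not> (\<exists>y \<in> subfield_q q. y ^ 2 = x)}"

definition beta_f :: "('a::field \<Rightarrow> 'a) \<Rightarrow> 'a \<Rightarrow> 'a \<Rightarrow> nat" where
  "beta_f f a b = card {(x, y). f x - f y = b \<and> f (x + a) - f (y + a) = b}"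

end

theory Submission
  imports Defs "HOL-Number_Theory.Residues" "HOL-Computational_Algebra.Polynomial"
begin


lemma ff_power_card:
  fixes x :: "'a::{field,finite}"
  shows "x ^ CARD('a) = x"
proof (cases "x = 0")
  case False
  have "x * (\<Prod>y\<in>UNIV-{0}. x * y) = x * x ^ (card (UNIV :: 'a set) - 1) * \<Prod>(UNIV-{0})"
    by (simp add: prod.distrib mult_ac)
  also have "x * x ^ (card (UNIV :: 'a set) - 1) = x ^ Suc (card (UNIV :: 'a set) - 1)"
    by (subst power_Suc) auto
  also have "Suc (card (UNIV :: 'a set) - 1) = card (UNIV :: 'a set)"
    using finite_UNIV_card_ge_0[where ?'a = 'a] by simp
  also have "(\<Prod>y\<in>UNIV-{0}. x * y) = (\<Prod>y\<in>UNIV-{0}. y)"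
    by (rule prod.reindex_bij_witness[of _ "\<lambda>y. y / x" "\<lambda>y. x * y"]) (use False in auto)
  finally show ?thesis
    by simp
qed (use finite_UNIV_card_ge_0[where ?'a = 'a] in auto)

lemma roots_unity_bound:
  assumes "j \<ge> 1"
  shows "card {x::'a::field. x ^ j = 1} \<le> j"
proof -
  let ?P = "monom (1::'a) j + [:-1:]"
  have d: "degree ?P = j" using assms by (subst degree_add_eq_left) (simp_all add: degree_monom_eq)
  hence "?P \<noteq> 0" using assms by auto
  hence "card {x. poly ?P x = 0} \<le> degree ?P" by (rule card_poly_roots_bound)
  moreover have "{x. poly ?P x = 0} = {x. x ^ j = 1}" by (auto simp: poly_monom)
  ultimately show ?thesis using d by simp
qed

lemma kth_power:
  fixes k :: nat
  assumes k: "k \<ge> 1" and dv: "k dvd CARD('a::{field,finite}) - 1"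
  shows "card {x::'a. x ^ k = 1} = k"
    and "\<And>y::'a. y ^ ((CARD('a) - 1) div k) = 1 \<Longrightarrow> \<exists>x. x ^ k = y"
proof -
  define N where "N = CARD('a)"
  have N2: "N \<ge> 2"
  proof -
    have "card {0::'a,1} \<le> N" unfolding N_def using card_mono[of UNIV "{0::'a,1}"] by simp
    thus ?thesis by simp
  qed
  define j where "j = (N - 1) div k"
  have j1: "j \<ge> 1" using dv N2 k unfolding j_def N_def[symmetric]
    by (metis One_nat_def Suc_leI diff_is_0_eq dvd_div_eq_0_iff not_less_eq_eq numerals(2) zero_less_iff_neq_zero)
  have kj: "k * j = N - 1" unfolding j_def using dv N_def by simp
  define G where "G = (UNIV::'a set) - {0}"
  define Z where "Z = {x::'a. x ^ k = 1}"
  define I where "I = (\<lambda>x. x ^ k) ` G"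
  define R where "R = {y::'a. y ^ j = 1}"
  have cG: "card G = N - 1" unfolding G_def N_def by (simp add: card_Diff_singleton)
  have pw: "x ^ (N - 1) = 1" if "x \<noteq> 0" for x :: 'a
  proof -
    have "x ^ (N - 1) * x = x ^ N" using N2 by (metis Suc_diff_1 less_le_trans pos2 power_Suc2)
    also have "\<dots> = x" unfolding N_def by (rule ff_power_card)
    finally show ?thesis using that by simp
  qed
  have IR: "I \<subseteq> R"
  proof
    fix y assume "y \<in> I"
    then obtain x where "x \<in> G" "y = x ^ k" unfolding I_def by auto
    hence "y ^ j = x ^ (N - 1)" by (simp add: power_mult[symmetric] kj)
    thus "y \<in> R" using pw \<open>x \<in> G\<close> unfolding R_def G_def by auto
  qed
  have cZ: "card Z \<le> k" unfolding Z_def using roots_unity_bound k by blast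
  have cR: "card R \<le> j" unfolding R_def using roots_unity_bound j1 by blast
  have cI: "card I \<le> j" using card_mono[OF _ IR] cR by (meson finite order.trans)
  have fib: "card G = card I * card Z"
  proof -
    define A where "A = (\<lambda>y. {x\<in>G. x ^ k = y})"
    have GU: "G = (\<Union>y\<in>I. A y)" unfolding A_def I_def by auto
    have "card (\<Union>y\<in>I. A y) = (\<Sum>y\<in>I. card (A y))"
      by (rule card_UN_disjoint) (auto simp: A_def)
    also have "\<dots> = (\<Sum>y\<in>I. card Z)"
    proof (rule sum.cong[OF refl])
      fix y assume "y \<in> I"
      then obtain x0 where x0: "x0 \<in> G" "y = x0 ^ k" unfolding I_def by auto
      have x0nz: "x0 \<noteq> 0" using x0 unfolding G_def by auto
      have "A y = (\<lambda>z. x0 * z) ` Z"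
      proof
        show "A y \<subseteq> (\<lambda>z. x0 * z) ` Z"
        proof
          fix x assume "x \<in> A y"
          hence "x ^ k = x0 ^ k" using x0 unfolding A_def by auto
          hence "(x / x0) ^ k = 1" using x0nz by (simp add: power_divide)
          moreover have "x = x0 * (x / x0)" using x0nz by simp
          ultimately show "x \<in> (\<lambda>z. x0 * z) ` Z" unfolding Z_def by blast
        qed
        have z0: "(0::'a) ^ k \<noteq> 1" using k by (cases k) auto
        show "(\<lambda>z. x0 * z) ` Z \<subseteq> A y"
          using x0 x0nz z0 unfolding Z_def A_def G_def by (auto simp: power_mult_distrib)
      qed
      moreover have "inj_on (\<lambda>z. x0 * z) Z" using x0nz by (auto intro: inj_onI)
      ultimately show "card (A y) = card Z" by (simp add: card_image)
    qed
    finally show ?thesis using GU by simp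
  qed
  have Zpos: "card Z \<ge> 1"
  proof -
    have "1 \<in> Z" unfolding Z_def by simp
    thus ?thesis by (metis One_nat_def Suc_leI card_gt_0_iff empty_iff finite)
  qed
  have eqs: "card Z = k \<and> card I = j"
  proof -
    have e: "card I * card Z = j * k" using fib cG kj by (simp add: mult.commute)
    have a: "card I * card Z \<le> j * card Z" by (rule mult_le_mono1[OF cI])
    have b: "j * card Z \<le> j * k" by (rule mult_le_mono2[OF cZ])
    have "j * card Z = j * k" using a b e by linarith
    hence z: "card Z = k" using j1 by simp
    hence "card I * k = j * k" using e by simp
    hence "card I = j" using k by simp
    thus ?thesis using z by simp
  qed
  thus "card {x::'a. x ^ k = 1} = k" unfolding Z_def by simp
  have "I = R" using IR eqs cR by (metis card_seteq finite)
  fix y :: 'a assume "y ^ ((CARD('a) - 1) div k) = 1"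
  hence "y \<in> R" unfolding R_def j_def N_def by simp
  hence "y \<in> I" using \<open>I = R\<close> by simp
  thus "\<exists>x. x ^ k = y" unfolding I_def by auto
qed



locale frob =
  fixes sg :: "'a::{field,finite} \<Rightarrow> 'a" and n :: nat
  assumes sg_pow_def: "\<And>x. sg x = x ^ (6*n+1)"
    and sg_add: "\<And>x y. sg (x + y) = sg x + sg y"
    and sg_sg: "\<And>x. sg (sg x) = x"
    and two: "(2::'a) \<noteq> 0" and three: "(3::'a) \<noteq> 0"
    and sqrtK: "\<And>d. sg d = d \<Longrightarrow> \<exists>e. e^2 = d"
    and omega: "\<exists>w. w^2 + w + 1 = 0 \<and> sg w = w"
begin

lemma sg_mult: "sg (x * y) = sg x * sg y"
  by (simp add: sg_pow_def power_mult_distrib)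
lemma sg_0: "sg 0 = 0"
  by (simp add: sg_pow_def)
lemma sg_1: "sg 1 = 1"
  by (simp add: sg_pow_def)
lemma sg_neg: "sg (- x) = - sg x"
  using sg_add[of x "-x"] sg_0 by (simp add: eq_neg_iff_add_eq_0 add.commute)
lemma sg_diff: "sg (x - y) = sg x - sg y"
  using sg_add[of x "-y"] sg_neg[of y] by simp
lemma sg_inverse: "sg (inverse x) = inverse (sg x)"
  by (simp add: sg_pow_def power_inverse)
lemma sg_divide: "sg (x / y) = sg x / sg y"
  by (simp add: divide_inverse sg_mult sg_inverse)
lemma sg_power: "sg (x ^ k) = sg x ^ k"
  unfolding sg_pow_def by (metis power_mult mult.commute)
lemma sg_of_nat: "sg (of_nat k) = of_nat k"
  by (induction k) (simp_all add: sg_0 sg_add sg_1)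
lemma sg_numeral: "sg (numeral w) = numeral w"
  using sg_of_nat[of "numeral w"] by simp

lemmas sg_simps = sg_mult sg_0 sg_1 sg_neg sg_diff sg_inverse sg_divide sg_power sg_numeral sg_add sg_sg

definition Sol :: "'a \<Rightarrow> 'a set" where
  "Sol c = {s. 4 * sg s * s^2 + sg s + 2 * s = c}"

lemma four: "(4::'a) \<noteq> 0"
  using two by (metis mult_eq_0_iff numeral_times_numeral semiring_norm(12) semiring_norm(13))
lemma eight: "(8::'a) \<noteq> 0"
  using two four by (metis mult_eq_0_iff numeral_times_numeral semiring_norm(12) semiring_norm(13))
lemma half: "sg (1/2) = 1/2" by (simp add: sg_simps)

lemma pairs_sub:
  assumes c: "sg c = c" "c \<noteq> 0"
    and E1: "sg x * x^2 - sg y * y^2 = c/2"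
    and E2: "sg (x+1) * (x+1)^2 - sg (y+1) * (y+1)^2 = c/2"
  shows "\<exists>s\<in>Sol c. (x, y) = (s - 1/2, - s - 1/2)"
proof -
  define h :: 'a where "h = 1/2"
  have h2: "2 * h = 1" unfolding h_def using two by simp
  have sh: "sg h = h" unfolding h_def by (simp add: sg_simps)
  define s where "s = x + h"
  define t where "t = y + h"
  define a where "a = sg s"
  define b where "b = sg t"
  have xs: "x = s - h" and yt: "y = t - h" unfolding s_def t_def by simp_all
  have x1: "x + 1 = s + h" "y + 1 = t + h" unfolding s_def t_def using h2 by (simp_all add: algebra_simps flip: h2)
  have sx: "sg x = a - h" "sg (x+1) = a + h" unfolding x1 unfolding xs a_def
    using sh by (simp_all add: sg_simps)
  have sy: "sg y = b - h" "sg (y+1) = b + h" unfolding x1 unfolding yt b_def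
    using sh by (simp_all add: sg_simps)
  have ch: "c/2 = c * h" unfolding h_def by simp
  have F1: "(a - h) * (s - h)^2 - (b - h) * (t - h)^2 = c * h"
    using E1 unfolding sx sy ch unfolding xs yt by simp
  have F2: "(a + h) * (s + h)^2 - (b + h) * (t + h)^2 = c * h"
    using E2 unfolding sx sy ch unfolding x1 .
  have "(a + h) * (s + h)^2 - (b + h) * (t + h)^2
       - ((a - h) * (s - h)^2 - (b - h) * (t - h)^2) = (2*h) * (2*a*s + s^2 - 2*b*t - t^2)"
    by (simp add: algebra_simps power2_eq_square)
  hence D: "2*a*s + s^2 - 2*b*t - t^2 = 0" using F1 F2 h2 by simp
  define u where "u = s - t"
  define w where "w = s + t"
  have su: "sg u = a - b" "sg w = a + b" unfolding u_def w_def a_def b_def by (simp_all add: sg_simps)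
  have D': "sg w * u + sg u * w + u * w = 0"
  proof -
    have "sg w * u + sg u * w + u * w = (a+b)*(s-t) + (a-b)*(s+t) + (s-t)*(s+t)"
      unfolding su unfolding u_def w_def ..
    also have "\<dots> = 2*a*s + s^2 - 2*b*t - t^2" by (simp add: algebra_simps power2_eq_square)
    finally show ?thesis using D by simp
  qed
  have D'': "w * sg u + u * sg w + sg u * sg w = 0"
    using arg_cong[OF D', of sg] by (simp add: sg_simps)
  define P where "P = u * w"
  have sP: "sg P = P" using D' D'' unfolding P_def
    by (simp add: sg_simps) (metis add_diff_cancel add.commute mult.commute eq_neg_iff_add_eq_0 add.assoc)
  define A where "A = sg w * u"
  have sA: "sg A = w * sg u" unfolding A_def by (simp add: sg_simps)
  have sum: "A + sg A = - P"
  proof -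
    have "A + sg A = sg w * u + w * sg u" using sA A_def by simp
    thus ?thesis using D' unfolding P_def by (simp add: algebra_simps eq_neg_iff_add_eq_0)
  qed
  have prod: "A * sg A = P * P"
  proof -
    have "A * sg A = (sg w * u) * (w * sg u)" using sA A_def by simp
    also have "\<dots> = (u * w) * (sg u * sg w)" by (simp add: ac_simps)
    finally have "A * sg A = (u * w) * (sg u * sg w)" .
    also have "sg u * sg w = sg P" unfolding P_def by (simp add: sg_simps)
    finally show ?thesis using sP unfolding P_def by simp
  qed
  have P0: "P = 0"
  proof (rule ccontr)
    assume Pn: "P \<noteq> 0"
    define r where "r = A / P"
    have "A * A + P * A + P * P = 0"
    proof -
      have "A * A + P * A + P * P = A * A - (A + sg A) * A + A * sg A" using sum prod by simp
      also have "\<dots> = 0" by (simp add: algebra_simps)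
      finally show ?thesis .
    qed
    hence r2: "r * r + r + 1 = 0" unfolding r_def using Pn
      by (simp add: field_simps)
    have r3: "r ^ 3 = 1"
    proof -
      have "r ^ 3 - 1 = (r - 1) * (r * r + r + 1)" by (simp add: algebra_simps power3_eq_cube)
      thus ?thesis using r2 by simp
    qed
    have "sg r = r ^ (6*n+1)" by (rule sg_pow_def)
    also have "\<dots> = (r^3)^(2*n) * r" by (simp add: power_mult[symmetric] power_add mult.assoc)
    also have "\<dots> = r" using r3 by simp
    finally have "sg r = r" .
    hence "sg A / P = A / P" unfolding r_def using sP by (simp add: sg_simps)
    hence AA: "sg A = A" using Pn by (simp add: divide_cancel_right)
    hence "2 * A = - P" using sum by simp
    have a1: "A * A = P * P" using prod AA by simp
    have "P = - (2 * A)" using \<open>2 * A = - P\<close> by simp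
    hence a2: "P * P = (2 * A) * (2 * A)" by simp
    have a3: "(2 * A) * (2 * A) = 4 * (A * A)" by (simp add: algebra_simps)
    have e4: "4 * (A * A) = A * A" using a1 a2 a3 by simp
    have "3 * (A * A) = 4 * (A * A) - A * A" by (simp add: algebra_simps)
    hence "3 * (A * A) = 0" using e4 by simp
    hence "A = 0" using three by simp
    thus False using Pn \<open>2 * A = - P\<close> by simp
  qed
  have un: "u \<noteq> 0"
  proof
    assume "u = 0"
    hence "s = t" unfolding u_def by simp
    hence "a = b" unfolding a_def b_def by simp
    hence "c * h = 0" using F1 \<open>s = t\<close> by simp
    thus False using c h2 by auto
  qed
  hence "w = 0" using P0 unfolding P_def by simp
  hence ts: "t = - s" unfolding w_def by (simp add: eq_neg_iff_add_eq_0 add.commute)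
  hence ba: "b = - a" unfolding a_def b_def by (simp add: sg_simps)
  have G: "(a - h) * (s - h)^2 - (- a - h) * (- s - h)^2 = c * h"
    using F1 unfolding ts ba .
  have "2 * ((a - h) * (s - h)^2 - (- a - h) * (- s - h)^2) = 4*a*s^2 + (2*h)^2*a + 2*(2*h)^2*s"
    by (simp add: algebra_simps power2_eq_square)
  hence "4 * a * s^2 + a + 2 * s = 2 * (c * h)" using G h2 by simp
  also have "2 * (c * h) = c" using h2 by (metis mult.left_commute mult_1_right)
  finally have "4 * a * s^2 + a + 2 * s = c" .
  hence "s \<in> Sol c" unfolding Sol_def a_def by simp
  moreover have "(x, y) = (s - 1/2, - s - 1/2)" using xs yt ts h_def by simp
  ultimately show ?thesis by blast
qed

lemma pairs_sup:
  assumes "s \<in> Sol c"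
  shows "sg (s - 1/2) * (s - 1/2)^2 - sg (- s - 1/2) * (- s - 1/2)^2 = c/2
       \<and> sg (s - 1/2 + 1) * (s - 1/2 + 1)^2 - sg (- s - 1/2 + 1) * (- s - 1/2 + 1)^2 = c/2"
proof -
  define h :: 'a where "h = 1/2"
  have h2: "2 * h = 1" unfolding h_def using two by simp
  have sh: "sg h = h" unfolding h_def by (simp add: sg_simps)
  define a where "a = sg s"
  have eq: "4 * a * s^2 + a + 2 * s = c" using assms unfolding Sol_def a_def by simp
  have r1: "s - 1/2 + 1 = s + h" "- s - 1/2 + 1 = h - s" unfolding h_def using two
    by (simp_all add: field_simps)
  have r2: "s - 1/2 = s - h" "- s - 1/2 = - s - h" unfolding h_def by simp_all
  have ch: "c/2 = c * h" unfolding h_def by simp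
  define Q where "Q = (a - h) * (s - h)^2 + (a + h) * (s + h)^2"
  have "2 * Q = 4*a*s^2 + (2*h)^2*a + 2*(2*h)^2*s" unfolding Q_def
    by (simp add: algebra_simps power2_eq_square)
  hence "2 * Q = c" using eq h2 by simp
  hence Qc: "Q = c * h" using h2 by (metis mult.commute mult.left_commute mult_1_right)
  have "sg (s - h) * (s - h)^2 - sg (- s - h) * (- s - h)^2 = Q"
    unfolding Q_def using sh by (simp add: sg_simps a_def algebra_simps power2_eq_square)
  moreover have "sg (s + h) * (s + h)^2 - sg (h - s) * (h - s)^2 = Q"
    unfolding Q_def using sh by (simp add: sg_simps a_def algebra_simps power2_eq_square)
  ultimately show ?thesis unfolding r1 unfolding r2 ch Qc by simp
qed

lemma pairs_eq:
  assumes c: "sg c = c" "c \<noteq> 0"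
  shows "{(x, y). sg x * x^2 - sg y * y^2 = c/2 \<and> sg (x+1) * (x+1)^2 - sg (y+1) * (y+1)^2 = c/2}
         = (\<lambda>s. (s - 1/2, - s - 1/2)) ` Sol c"
proof
  show "{(x, y). sg x * x^2 - sg y * y^2 = c/2 \<and> sg (x+1) * (x+1)^2 - sg (y+1) * (y+1)^2 = c/2}
         \<subseteq> (\<lambda>s. (s - 1/2, - s - 1/2)) ` Sol c"
  proof
    fix z assume "z \<in> {(x, y). sg x * x^2 - sg y * y^2 = c/2 \<and> sg (x+1) * (x+1)^2 - sg (y+1) * (y+1)^2 = c/2}"
    then obtain x y where z: "z = (x, y)" and e: "sg x * x^2 - sg y * y^2 = c/2" "sg (x+1) * (x+1)^2 - sg (y+1) * (y+1)^2 = c/2"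
      by blast
    from pairs_sub[OF c e] obtain s where "s \<in> Sol c" "(x, y) = (s - 1/2, - s - 1/2)" by blast
    thus "z \<in> (\<lambda>s. (s - 1/2, - s - 1/2)) ` Sol c" using z by blast
  qed
  show "(\<lambda>s. (s - 1/2, - s - 1/2)) ` Sol c \<subseteq>
    {(x, y). sg x * x^2 - sg y * y^2 = c/2 \<and> sg (x+1) * (x+1)^2 - sg (y+1) * (y+1)^2 = c/2}"
    using pairs_sup by auto
qed

lemma card_pairs:
  assumes c: "sg c = c" "c \<noteq> 0"
  shows "card {(x, y). sg x * x^2 - sg y * y^2 = c/2 \<and> sg (x+1) * (x+1)^2 - sg (y+1) * (y+1)^2 = c/2}
         = card (Sol c)"
  unfolding pairs_eq[OF c] by (rule card_image) (auto intro: inj_onI)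

lemma addz: "(x::'a) + y = 0 \<Longrightarrow> x = - y"
  by (simp add: eq_neg_iff_add_eq_0)

lemma sol_conj:
  assumes "s \<in> Sol c" "sg c = c"
  shows "(s - sg s) * (4 * s * sg s + 1) = 0"
proof -
  define a where "a = sg s"
  have e1: "4 * a * s^2 + a + 2 * s = c" using assms unfolding Sol_def a_def by simp
  have "sg (4 * a * s^2 + a + 2 * s) = sg c" using e1 by simp
  hence e2: "4 * s * a^2 + s + 2 * a = c" using assms(2) unfolding a_def by (simp add: sg_simps)
  have "(s - a) * (4 * s * a + 1) = (4 * a * s^2 + a + 2 * s) - (4 * s * a^2 + s + 2 * a)"
    by (simp add: algebra_simps power2_eq_square)
  thus ?thesis using e1 e2 unfolding a_def by simp
qed

lemma sol_notK:
  assumes "s \<in> Sol c" "sg c = c" "sg s \<noteq> s"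
  shows "(2 * s - c)^2 = c^2 + 1"
proof -
  define a where "a = sg s"
  have e1: "4 * a * s^2 + a + 2 * s = c" using assms unfolding Sol_def a_def by simp
  have "4 * s * a + 1 = 0" using sol_conj[OF assms(1,2)] assms(3) unfolding a_def by simp
  hence p: "4 * s * a = - 1" by (simp add: eq_neg_iff_add_eq_0)
  have "4 * a * s^2 = s * (4 * s * a)" by (simp add: algebra_simps power2_eq_square)
  hence "4 * a * s^2 = - s" using p by simp
  hence sa: "s + a = c" using e1 by (simp add: algebra_simps)
  have "(2 * s - c)^2 = (s + a)^2 - 4 * s * a" unfolding sa[symmetric]
    by (simp add: algebra_simps power2_eq_square)
  thus ?thesis using sa p by simp
qed

lemma sol_notK_mem:
  assumes "sg s = c - s" "4 * s * (c - s) + 1 = 0"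
  shows "s \<in> Sol c"
proof -
  have p: "4 * s * (c - s) = - 1" using assms(2) by (simp add: eq_neg_iff_add_eq_0)
  have "4 * (c - s) * s^2 + (c - s) + 2 * s = s * (4 * s * (c - s)) + c + s"
    by (simp add: algebra_simps power2_eq_square)
  also have "\<dots> = c" using p by simp
  finally show ?thesis unfolding Sol_def using assms(1) by simp
qed

lemma sol_K:
  assumes "s \<in> Sol c" "sg s = s"
  shows "4 * s^3 + 3 * s = c"
proof -
  have "4 * s * s^2 + s + 2 * s = c" using assms unfolding Sol_def by simp
  thus ?thesis by (simp add: algebra_simps power2_eq_square power3_eq_cube)
qed

lemma sol_K_mem:
  assumes "sg s = s" "4 * s^3 + 3 * s = c"
  shows "s \<in> Sol c"
proof -
  have "4 * s * s^2 + s + 2 * s = 4 * s^3 + 3 * s" by (simp add: algebra_simps power2_eq_square power3_eq_cube)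
  thus ?thesis unfolding Sol_def using assms by simp
qed

lemma cubic_factor:
  fixes s s0 :: 'a
  shows "4*s^3+3*s - (4*s0^3+3*s0) = (s - s0) * ((2*s + s0)^2 + 3*(s0^2+1))"
  by (simp add: algebra_simps power2_eq_square power3_eq_cube)

lemma disc_id: fixes s0 :: 'a shows "(4*s0^3+3*s0)^2 + 1 = (s0^2+1)*(4*s0^2+1)^2"
  by (simp add: algebra_simps power2_eq_square power3_eq_cube)

lemma omega_sq: obtains g where "g^2 = -3" "sg g = g" "g \<noteq> 0"
proof -
  obtain w where w: "w^2 + w + 1 = 0" "sg w = w" using omega by blast
  have "(2*w+1)^2 = 4 * (w^2 + w + 1) - 3" by (simp add: algebra_simps power2_eq_square)
  hence g: "(2*w+1)^2 = -3" using w by simp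
  moreover have "sg (2*w+1) = 2*w+1" using w by (simp add: sg_simps)
  moreover have "2*w+1 \<noteq> 0" using g three by auto
  ultimately show ?thesis using that by blast
qed

lemma case_C1:
  assumes c: "sg c = c" "c \<noteq> 0" and ns: "\<not> (\<exists>y. sg y = y \<and> y^2 = c^2 + 1)"
  shows "card (Sol c) = 3"
proof -
  have scc: "sg (c^2+1) = c^2+1" using c by (simp add: sg_simps)
  then obtain d where dl: "d^2 = c^2 + 1" using sqrtK by blast
  have dn: "d \<noteq> 0"
  proof
    assume "d = 0"
    hence "sg 0 = 0 \<and> (0::'a)^2 = c^2 + 1" using dl by (simp add: sg_0)
    thus False using ns by blast
  qed
  have "(sg d)^2 = sg (d^2)" by (simp add: sg_power)
  also have "\<dots> = d^2" using dl scc by simp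
  finally have "(sg d)^2 = d^2" .
  hence "sg d = d \<or> sg d = - d" by (simp add: power2_eq_iff)
  moreover have "sg d \<noteq> d" using ns dl by blast
  ultimately have sd: "sg d = - d" by simp
  define V where "V = c + d"
  have sV: "sg V = c - d" unfolding V_def using c sd by (simp add: sg_simps)
  have VV: "V * sg V = - 1" unfolding sV unfolding V_def using dl
    by (simp add: algebra_simps power2_eq_square)
  have Vn: "V \<noteq> 0" using VV by auto
  have Vq: "V ^ (6*n+2) = - 1"
  proof -
    have "V ^ (6*n+2) = V * V ^ (6*n+1)" by simp
    also have "\<dots> = V * sg V" by (simp add: sg_pow_def)
    finally show ?thesis using VV by simp
  qed
  define v where "v = V ^ (8*n+3)"
  have v3: "v ^ 3 = V"
  proof -
    have "v ^ 3 = V ^ ((6*n+2)*4 + 1)" unfolding v_def power_mult[symmetric]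
      by (simp add: algebra_simps)
    also have "\<dots> = (V ^ (6*n+2))^4 * V" by (simp only: power_add power_mult power_one_right)
    also have "\<dots> = V" using Vq by simp
    finally show ?thesis .
  qed
  have vq: "v ^ (6*n+2) = - 1"
  proof -
    have "v ^ (6*n+2) = (V ^ (6*n+2)) ^ (8*n+3)" unfolding v_def power_mult[symmetric]
      by (simp add: mult.commute)
    also have "\<dots> = (-1) ^ (8*n+3)" using Vq by simp
    also have "\<dots> = -1" by simp
    finally show ?thesis .
  qed
  have svv: "sg v * v = - 1"
  proof -
    have "v ^ (6*n+2) = v * v ^ (6*n+1)" by simp
    hence "sg v * v = v ^ (6*n+2)" by (simp add: sg_pow_def mult.commute)
    also have "\<dots> = - 1" by (rule vq)
    finally show ?thesis .
  qed
  have vn: "v \<noteq> 0" using svv by auto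
  have sv: "sg v = - 1 / v" using svv vn by (simp add: field_simps eq_neg_iff_add_eq_0)
  define h :: 'a where "h = 1/2"
  have h2: "2 * h = 1" unfolding h_def using two by simp
  have h4: "4 * h^2 = 1" using h2 by (metis mult_1_right power2_eq_square mult.assoc mult.commute numeral_Bit0_eq_double mult_2)
  have sh: "sg h = h" unfolding h_def by (simp add: sg_simps)
  define s0 where "s0 = (v - 1/v) * h"
  have ss0: "sg s0 = s0" unfolding s0_def using sv vn sh
    by (simp add: sg_simps)
  have cid: "4*((v - w)*h)^3 + 3*((v-w)*h) = (4*h^2)*h*(v^3 - w^3) + 3*(v-w)*h*(1 - (4*h^2)*(v*w))" for w
    by (simp add: algebra_simps power2_eq_square power3_eq_cube)
  have "4*s0^3 + 3*s0 = h * (v^3 - (1/v)^3)" unfolding s0_def using cid[of "1/v"] h4 vn by simp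
  also have "\<dots> = h * (V - 1/V)" unfolding v3[symmetric] by (simp add: power_divide)
  also have "1/V = - sg V" using VV Vn by (simp add: field_simps eq_neg_iff_add_eq_0)
  also have "h * (V - - sg V) = h * (2 * c)" unfolding sV unfolding V_def by simp
  also have "\<dots> = c" using h2 by (metis mult.assoc mult.commute mult_1_right)
  finally have s0c: "4*s0^3 + 3*s0 = c" .
  have s0S: "s0 \<in> Sol c" by (rule sol_K_mem[OF ss0 s0c])
  define r1 where "r1 = (c + d)/2"
  define r2 where "r2 = (c - d)/2"
  have sr: "sg r1 = r2" "sg r2 = r1" unfolding r1_def r2_def using c sd by (simp_all add: sg_simps)
  have r12: "r2 = c - r1" "r1 = c - r2" unfolding r1_def r2_def using two by (simp_all add: field_simps)
  have prr: "4 * r1 * r2 + 1 = 0"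
  proof -
    have "4 * r1 * r2 = (c + d) * (c - d)" unfolding r1_def r2_def using two four by (simp add: field_simps)
    also have "\<dots> = c^2 - d^2" by (simp add: algebra_simps power2_eq_square)
    also have "\<dots> = -1" using dl by simp
    finally show ?thesis by simp
  qed
  have r1S: "r1 \<in> Sol c"
  proof (rule sol_notK_mem)
    show "sg r1 = c - r1" using sr(1) r12(1) by simp
    show "4 * r1 * (c - r1) + 1 = 0" using prr unfolding r12(1) .
  qed
  have r2S: "r2 \<in> Sol c"
  proof (rule sol_notK_mem)
    show "sg r2 = c - r2" using sr(2) r12(2) by simp
    show "4 * r2 * (c - r2) + 1 = 0" using prr unfolding r12(2)[symmetric] by (simp add: mult_ac)
  qed
  have sub: "Sol c \<subseteq> {s0, r1, r2}"
  proof
    fix s assume sS: "s \<in> Sol c"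
    show "s \<in> {s0, r1, r2}"
    proof (cases "sg s = s")
      case True
      have sc: "4*s^3 + 3*s = c" by (rule sol_K[OF sS True])
      have "(s - s0) * ((2*s + s0)^2 + 3*(s0^2+1)) = 0" using cubic_factor[of s s0] sc s0c by simp
      moreover have "(2*s + s0)^2 + 3*(s0^2+1) \<noteq> 0"
      proof
        assume h: "(2*s + s0)^2 + 3*(s0^2+1) = 0"
        obtain g where g: "g^2 = -3" "sg g = g" "g \<noteq> 0" using omega_sq by blast
        define y where "y = (2*s + s0) * (4*s0^2+1) / g"
        have "y^2 = (2*s + s0)^2 * (4*s0^2+1)^2 / g^2" unfolding y_def by (simp add: power_mult_distrib power_divide)
        also have "(2*s + s0)^2 = - 3 * (s0^2+1)" using h by (simp add: eq_neg_iff_add_eq_0 algebra_simps)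
        also have "- 3 * (s0^2+1) * (4*s0^2+1)^2 / g^2 = (s0^2+1) * (4*s0^2+1)^2"
        proof -
          have "- 3 * (s0^2+1) * (4*s0^2+1)^2 / g^2 = (- 3) * ((s0^2+1) * (4*s0^2+1)^2) / (- 3)"
            unfolding g(1) by (simp only: mult.assoc)
          also have "\<dots> = (s0^2+1) * (4*s0^2+1)^2" using three by (intro nonzero_mult_div_cancel_left) simp
          finally show ?thesis .
        qed
        also have "\<dots> = c^2 + 1" using disc_id[of s0] s0c by simp
        finally have "y^2 = c^2 + 1" .
        moreover have "sg y = y" unfolding y_def using True ss0 g by (simp add: sg_simps)
        ultimately show False using ns by blast
      qed
      ultimately show ?thesis by simp
    next
      case False
      have "(2 * s - c)^2 = d^2" using sol_notK[OF sS c(1) False] dl by simp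
      hence "2 * s - c = d \<or> 2 * s - c = - d" by (simp add: power2_eq_iff)
      hence "s = r1 \<or> s = r2" unfolding r1_def r2_def using two by (auto simp: field_simps)
      thus ?thesis by simp
    qed
  qed
  have "{s0, r1, r2} \<subseteq> Sol c" using s0S r1S r2S by simp
  hence Seq: "Sol c = {s0, r1, r2}" using sub by blast
  have "r1 \<noteq> r2" unfolding r1_def r2_def using dn two four by (simp add: field_simps)
  moreover have "s0 \<noteq> r1" using ss0 sr \<open>r1 \<noteq> r2\<close> by metis
  moreover have "s0 \<noteq> r2" using ss0 sr \<open>r1 \<noteq> r2\<close> by metis
  ultimately show ?thesis unfolding Seq by simp
qed

lemma sol_in_K_if_sq:
  assumes c: "sg c = c" and d: "sg d = d" "d^2 = c^2 + 1" and sS: "s \<in> Sol c"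
  shows "sg s = s"
proof (rule ccontr)
  assume F: "sg s \<noteq> s"
  have "(2 * s - c)^2 = d^2" using sol_notK[OF sS c F] d by simp
  hence "2 * s - c = d \<or> 2 * s - c = - d" by (simp add: power2_eq_iff)
  hence "2 * s = c + d \<or> 2 * s = c - d" by (auto simp: algebra_simps)
  hence "s = (c + d) / 2 \<or> s = (c - d) / 2" using two by (auto simp: field_simps)
  moreover have "sg ((c + d) / 2) = (c + d) / 2" "sg ((c - d) / 2) = (c - d) / 2" using c d by (simp_all add: sg_simps)
  ultimately have "sg s = s" by metis
  thus False using F by simp
qed

lemma case_C0:
  assumes c: "sg c = c" "c \<noteq> 0" and d: "sg d = d" "d \<noteq> 0" "d^2 = c^2 + 1"
  shows "card (Sol c) = 0 \<or> card (Sol c) = 3"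
proof (cases "Sol c = {}")
  case True thus ?thesis by simp
next
  case False
  then obtain s0 where s0S: "s0 \<in> Sol c" by blast
  have ss0: "sg s0 = s0" by (rule sol_in_K_if_sq[OF c(1) d(1) d(3) s0S])
  have s0c: "4*s0^3 + 3*s0 = c" by (rule sol_K[OF s0S ss0])
  have dd: "d^2 = (s0^2+1)*(4*s0^2+1)^2" using d(3) disc_id[of s0] s0c by simp
  define k where "k = 4*s0^2+1"
  have kn: "k \<noteq> 0" using dd d(2) unfolding k_def by auto
  have sk: "sg k = k" unfolding k_def using ss0 by (simp add: sg_simps)
  define e0 where "e0 = d / k"
  have e0sq: "e0^2 = s0^2 + 1" unfolding e0_def using dd kn unfolding k_def[symmetric]
    by (simp add: power_divide)
  have se0: "sg e0 = e0" unfolding e0_def using sk d by (simp add: sg_simps)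
  have e0n: "e0 \<noteq> 0" unfolding e0_def using d kn by simp
  obtain om where om: "om^2 = -3" "sg om = om" "om \<noteq> 0" using omega_sq by blast
  define g where "g = om * e0"
  have gsq: "g^2 = - 3 * (s0^2 + 1)" unfolding g_def using om e0sq by (simp add: power_mult_distrib)
  have sgg: "sg g = g" unfolding g_def using om se0 by (simp add: sg_simps)
  have gn: "g \<noteq> 0" unfolding g_def using om e0n by simp
  define h :: 'a where "h = 1/2"
  have h2: "2 * h = 1" unfolding h_def using two by simp
  have sh: "sg h = h" unfolding h_def by (simp add: sg_simps)
  define s1 where "s1 = (g - s0) * h"
  define s2 where "s2 = (- g - s0) * h"
  have t1: "2 * s1 + s0 = g" unfolding s1_def using h2 by (metis add.commute diff_add_cancel mult.left_commute mult_1_right)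
  have t2: "2 * s2 + s0 = - g" unfolding s2_def using h2 by (metis add.commute diff_add_cancel mult.left_commute mult_1_right)
  have root: "s \<in> Sol c" if "sg s = s" "2 * s + s0 = g \<or> 2 * s + s0 = - g" for s
  proof (rule sol_K_mem[OF that(1)])
    have "(2*s + s0)^2 + 3*(s0^2+1) = 0" using that(2) gsq by auto
    hence "4*s^3+3*s - (4*s0^3+3*s0) = 0" using cubic_factor[of s s0] by simp
    thus "4*s^3+3*s = c" using s0c by simp
  qed
  have s1S: "s1 \<in> Sol c" using root[of s1] t1 unfolding s1_def using sgg ss0 sh by (simp add: sg_simps)
  have s2S: "s2 \<in> Sol c" using root[of s2] t2 unfolding s2_def using sgg ss0 sh by (simp add: sg_simps)
  have sub: "Sol c \<subseteq> {s0, s1, s2}"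
  proof
    fix s assume sS: "s \<in> Sol c"
    have ss: "sg s = s" by (rule sol_in_K_if_sq[OF c(1) d(1) d(3) sS])
    have sc: "4*s^3 + 3*s = c" by (rule sol_K[OF sS ss])
    have "(s - s0) * ((2*s + s0)^2 + 3*(s0^2+1)) = 0" using cubic_factor[of s s0] sc s0c by simp
    hence "s = s0 \<or> (2*s + s0)^2 + 3*(s0^2+1) = 0" by simp
    moreover have "(2*s + s0)^2 = g^2" if "(2*s + s0)^2 + 3*(s0^2+1) = 0"
    proof -
      have "(2*s + s0)^2 = - (3*(s0^2+1))" by (rule addz[OF that])
      thus ?thesis using gsq by simp
    qed
    ultimately have "s = s0 \<or> 2*s + s0 = g \<or> 2*s + s0 = - g" by (auto simp: power2_eq_iff)
    moreover have "s = s1" if "2*s + s0 = g" using that t1 two by (metis add_right_cancel mult_cancel_left)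
    moreover have "s = s2" if "2*s + s0 = - g" using that t2 two by (metis add_right_cancel mult_cancel_left)
    ultimately show "s \<in> {s0, s1, s2}" by blast
  qed
  have Seq: "Sol c = {s0, s1, s2}" using sub s0S s1S s2S by blast
  have n12: "s1 \<noteq> s2"
  proof
    assume "s1 = s2"
    hence "g = - g" using t1 t2 by simp
    hence "g + g = 0" using eq_neg_iff_add_eq_0[of g g] by blast
    hence "2 * g = 0" by (simp only: mult_2)
    thus False using two gn by simp
  qed
  have n0: "s0 \<noteq> s1 \<and> s0 \<noteq> s2"
  proof (rule ccontr)
    assume "\<not> ?thesis"
    hence "2 * s0 + s0 = g \<or> 2 * s0 + s0 = - g" using t1 t2 by auto
    hence "(2 * s0 + s0)^2 = g^2" by (simp only: power2_eq_iff)
    hence e: "(2 * s0 + s0)^2 = - 3 * (s0^2 + 1)" using gsq by simp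
    have "(2 * s0 + s0)^2 = 9 * s0^2" by (simp add: power2_eq_square numeral_3_eq_3 algebra_simps)
    hence "9 * s0^2 + 3 * (s0^2 + 1) = 0" using e by simp
    moreover have "3 * (4 * s0^2 + 1) = 9 * s0^2 + 3 * (s0^2 + 1)" by (simp add: algebra_simps)
    ultimately have "3 * (4 * s0^2 + 1) = 0" by simp
    thus False using three kn unfolding k_def by (metis mult_eq_0_iff)
  qed
  show ?thesis unfolding Seq using n12 n0 by simp
qed

lemma case_Z:
  assumes c: "sg c = c" "c^2 + 1 = 0"
  shows "card (Sol c) \<le> 2"
proof (cases "Sol c = {}")
  case True thus ?thesis by simp
next
  case False
  then obtain s0 where s0S: "s0 \<in> Sol c" by blast
  have d0: "sg 0 = (0::'a)" "(0::'a)^2 = c^2 + 1" using c by (simp_all add: sg_0)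
  have ss0: "sg s0 = s0" by (rule sol_in_K_if_sq[OF c(1) d0 s0S])
  have s0c: "4*s0^3 + 3*s0 = c" by (rule sol_K[OF s0S ss0])
  have dd: "(s0^2+1)*(4*s0^2+1)^2 = 0" using c(2) disc_id[of s0] s0c by simp
  have inc: "(2*s + s0)^2 + 3*(s0^2+1) = 0" if "s \<in> Sol c" "s \<noteq> s0" for s
  proof -
    have ss: "sg s = s" by (rule sol_in_K_if_sq[OF c(1) d0 that(1)])
    have sc: "4*s^3 + 3*s = c" by (rule sol_K[OF that(1) ss])
    have "(s - s0) * ((2*s + s0)^2 + 3*(s0^2+1)) = 0" using cubic_factor[of s s0] sc s0c by simp
    thus ?thesis using that(2) by simp
  qed
  obtain z where sub: "Sol c \<subseteq> {s0, z}"
  proof (cases "s0^2 + 1 = 0")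
    case True
    have "Sol c \<subseteq> {s0, - s0 / 2}"
    proof
      fix s assume sS: "s \<in> Sol c"
      show "s \<in> {s0, - s0 / 2}"
      proof (cases "s = s0")
        case False
        have "(2*s + s0)^2 = 0" using inc[OF sS False] True by simp
        hence "2 * s = - s0" by (simp add: eq_neg_iff_add_eq_0)
        hence "s = - s0 / 2" using two by (simp add: field_simps)
        thus ?thesis by simp
      qed simp
    qed
    thus ?thesis using that by blast
  next
    case False
    hence k0: "4*s0^2+1 = 0" using dd by simp
    have "Sol c \<subseteq> {s0, - 2 * s0}"
    proof
      fix s assume sS: "s \<in> Sol c"
      show "s \<in> {s0, - 2 * s0}"
      proof (cases "s = s0")
        case False
        have e: "(2*s + s0)^2 + 3*(s0^2+1) = 0" by (rule inc[OF sS False])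
        have "3*(s0^2+1) = - ((3 * s0)^2)"
        proof -
          have "3*(s0^2+1) + (3 * s0)^2 = 3 * (4*s0^2+1)" by (simp add: algebra_simps power2_eq_square)
          hence "3*(s0^2+1) + (3 * s0)^2 = 0" using k0 by simp
          thus ?thesis by (rule addz)
        qed
        have "(2*s + s0)^2 = - (3*(s0^2+1))" by (rule addz[OF e])
        also have "\<dots> = (3 * s0)^2" unfolding \<open>3*(s0^2+1) = - ((3 * s0)^2)\<close> by simp
        finally have "(2*s + s0)^2 = (3 * s0)^2" .
        hence "2*s + s0 = 3 * s0 \<or> 2*s + s0 = - (3 * s0)" by (simp only: power2_eq_iff)
        hence "2 * s = 2 * s0 \<or> 2 * s = 2 * (- 2 * s0)"
        proof
          assume a: "2*s + s0 = 3 * s0"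
          have "3*s0 = 2*s0 + s0" by (simp add: numeral_3_eq_3 algebra_simps)
          hence "2 * s = 2 * s0" using a by simp
          thus ?thesis by simp
        next
          assume a: "2*s + s0 = - (3 * s0)"
          have h: "-(3*s0) = 2*(-2*s0) + s0" by (simp add: numeral_3_eq_3 algebra_simps)
          hence "2 * s = 2 * (- 2 * s0)" using a by (metis add_right_cancel)
          thus ?thesis by simp
        qed
        hence "s = s0 \<or> s = - 2 * s0" using two by (metis mult_cancel_left)
        thus ?thesis by auto
      qed simp
    qed
    thus ?thesis using that by blast
  qed
  have "card (Sol c) \<le> card {s0, z}" by (rule card_mono) (simp_all add: sub)
  also have "\<dots> \<le> 2" by (simp add: card_insert_if)
  finally show ?thesis .
qed

end

theorem lemma9:
  fixes p m q :: nat and c :: "'a::{field, finite}"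
  assumes "prime p" and "odd p" and "m \<ge> 1" and "q = p ^ m" and "q mod 6 = 1"
    and "CARD('a) = q ^ 2"
    and "c \<in> subfield_q q" and "c \<noteq> 0"
  defines "f \<equiv> (\<lambda>x::'a. x ^ (q + 2))"
  defines "\<beta> \<equiv> (\<lambda>b::'a. beta_f f 1 (b / 4))"
  shows "(c\<^sup>2 + 1 \<in> C1 q \<longrightarrow> \<beta> (2 * c) = 3)
       \<and> (c\<^sup>2 + 1 \<in> C0 q \<longrightarrow> \<beta> (2 * c) \<in> {0, 3})
       \<and> (c\<^sup>2 + 1 = 0 \<longrightarrow> \<beta> (2 * c) \<in> {0, 1, 2})"
proof -
  note pp = assms(1) and po = assms(2) and m1 = assms(3) and qd = assms(4) and q6 = assms(5)
    and card = assms(6) and cK = assms(7) and cn = assms(8)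
  have fin: "finite (UNIV :: 'a set)" by simp
  have cpos: "CHAR('a) > 0" using finite_imp_CHAR_pos[OF fin] .
  have cpr: "prime CHAR('a)" using prime_CHAR_semidom[OF cpos] .
  have "CHAR('a) dvd CARD('a)" by (rule CHAR_dvd_CARD)
  hence "CHAR('a) dvd p ^ (m * 2)" unfolding card qd by (simp add: power_mult)
  hence "CHAR('a) dvd p" using cpr prime_dvd_power by blast
  hence cp: "CHAR('a) = p" using cpr pp primes_dvd_imp_eq by blast
  have frob: "(x + y) ^ q = x ^ q + y ^ q" for x y :: 'a
    by (rule freshmans_dream'[where n = m]) (simp_all add: cpr cp qd pp)
  have sgsg: "(x ^ q) ^ q = x" for x :: 'a
  proof -
    have "(x ^ q) ^ q = x ^ CARD('a)" unfolding card by (simp add: power_mult[symmetric] power2_eq_square)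
    thus ?thesis using ff_power_card by simp
  qed
  have p2: "p \<noteq> 2" using po by auto
  have p3: "p \<noteq> 3"
  proof
    assume "p = 3"
    hence "3 dvd q" unfolding qd using m1 by (simp add: dvd_power)
    thus False using q6 by presburger
  qed
  have two: "(2::'a) \<noteq> 0"
  proof
    assume "(2::'a) = 0"
    hence "(of_nat 2 :: 'a) = 0" by simp
    hence "p dvd 2" using of_nat_eq_0_iff_char_dvd cp by metis
    thus False using p2 pp by (metis prime_nat_iff two_is_prime_nat primes_dvd_imp_eq)
  qed
  have three: "(3::'a) \<noteq> 0"
  proof
    assume "(3::'a) = 0"
    hence "(of_nat 3 :: 'a) = 0" by simp
    hence "p dvd 3" using of_nat_eq_0_iff_char_dvd cp by metis
    moreover have "prime (3::nat)" by simp
    ultimately show False using p3 pp primes_dvd_imp_eq by blast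
  qed
  define n where "n = q div 6"
  have qn: "q = 6 * n + 1" unfolding n_def using q6 by presburger
  have CA: "CARD('a) - 1 = 6 * n * (6 * n + 2)" unfolding card qn by (simp add: power2_eq_square algebra_simps)
  have sqrtK: "\<exists>e. e^2 = d" if "d ^ q = d" for d :: 'a
  proof (cases "d = 0")
    case True thus ?thesis by (intro exI[of _ 0]) simp
  next
    case False
    have d1: "d ^ (6 * n) = 1"
    proof -
      have "d ^ (6 * n) * d = d" using that unfolding qn by (simp add: power_Suc2[symmetric])
      thus ?thesis using False by simp
    qed
    have "2 dvd CARD('a) - 1" unfolding CA by simp
    moreover have "d ^ ((CARD('a) - 1) div 2) = 1"
    proof -
      have "(CARD('a) - 1) div 2 = 6 * n * (3 * n + 1)" unfolding CA by simp
      hence "d ^ ((CARD('a) - 1) div 2) = (d ^ (6 * n)) ^ (3 * n + 1)" by (simp only: power_mult)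
      thus ?thesis using d1 by simp
    qed
    ultimately show ?thesis using kth_power(2)[of 2] by auto
  qed
  have omega: "\<exists>w::'a. w^2 + w + 1 = 0 \<and> w ^ q = w"
  proof -
    have "3 dvd CARD('a) - 1" unfolding CA by simp
    hence c3: "card {x::'a. x ^ 3 = 1} = 3" using kth_power(1)[of 3] by simp
    have "{x::'a. x ^ 3 = 1} \<noteq> {1}" using c3 by auto
    moreover have "1 \<in> {x::'a. x ^ 3 = 1}" by simp
    ultimately obtain w :: 'a where w: "w ^ 3 = 1" "w \<noteq> 1" by blast
    have "(w - 1) * (w^2 + w + 1) = w ^ 3 - 1" by (simp add: algebra_simps power2_eq_square power3_eq_cube)
    hence "w^2 + w + 1 = 0" using w by simp
    moreover have "w ^ q = w"
    proof -
      have "w ^ q = (w ^ 3) ^ (2 * n) * w" unfolding qn by (simp add: power_mult[symmetric])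
      thus ?thesis using w by simp
    qed
    ultimately show ?thesis by blast
  qed
  interpret F: frob "\<lambda>x::'a. x ^ q" n
  proof
    show "\<And>x::'a. x ^ q = x ^ (6 * n + 1)" unfolding qn ..
    show "\<And>x y::'a. (x + y) ^ q = x ^ q + y ^ q" by (rule frob)
    show "\<And>x::'a. (x ^ q) ^ q = x" by (rule sgsg)
    show "(2::'a) \<noteq> 0" by (rule two)
    show "(3::'a) \<noteq> 0" by (rule three)
    show "\<And>d::'a. d ^ q = d \<Longrightarrow> \<exists>e. e^2 = d" by (rule sqrtK)
    show "\<exists>w::'a. w^2 + w + 1 = 0 \<and> w ^ q = w" by (rule omega)
  qed
  have sc: "c ^ q = c" using cK unfolding subfield_q_def by simp
  have fx: "f x = x ^ q * x^2" for x unfolding f_def by (simp only: power_add)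
  have b2: "(2 * c) / 4 = c / 2" using two F.four by (simp add: field_simps)
  have beta: "\<beta> (2 * c) = card (F.Sol c)"
  proof -
    have "\<beta> (2 * c) = card {(x, y). x ^ q * x^2 - y ^ q * y^2 = c/2 \<and> (x+1) ^ q * (x+1)^2 - (y+1) ^ q * (y+1)^2 = c/2}"
      unfolding \<beta>_def beta_f_def fx b2 by simp
    also have "\<dots> = card (F.Sol c)" by (rule F.card_pairs[OF sc cn])
    finally show ?thesis .
  qed
  have part1: "\<beta> (2 * c) = 3" if "c\<^sup>2 + 1 \<in> C1 q"
  proof -
    have "\<not> (\<exists>y. y ^ q = y \<and> y^2 = c^2 + 1)" using that unfolding C1_def subfield_q_def by auto
    thus ?thesis unfolding beta by (rule F.case_C1[OF sc cn])
  qed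
  have part2: "\<beta> (2 * c) \<in> {0, 3}" if h0: "c\<^sup>2 + 1 \<in> C0 q"
  proof -
    obtain y where y: "y ^ q = y" "y^2 = c^2 + 1" "c^2 + 1 \<noteq> 0" using h0 unfolding C0_def subfield_q_def by auto
    have "y \<noteq> 0" using y by auto
    hence "card (F.Sol c) = 0 \<or> card (F.Sol c) = 3" using F.case_C0[OF sc cn y(1)] y by blast
    thus ?thesis unfolding beta by auto
  qed
  have part3: "\<beta> (2 * c) \<in> {0, 1, 2}" if "c\<^sup>2 + 1 = 0"
  proof -
    have "card (F.Sol c) \<le> 2" by (rule F.case_Z[OF sc that])
    hence "card (F.Sol c) = 0 \<or> card (F.Sol c) = 1 \<or> card (F.Sol c) = 2" by presburger
    thus ?thesis unfolding beta by blast
  qed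
  show ?thesis using part1 part2 part3 by blast
qed

end
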